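(* Let $n\geq2$ be finite, let $\mathfrak{A}\in TA_n$ be countable and let $X\subseteq A$ satisfy $\prod X=0$. Then there are a permutable set $V$ and an injective homomorphism $f:\mathfrak{A}\to\wp(V)$ such that $\bigcap_{x\in X}f(x)=\emptyset$.
   Context: $TA_n=\mathbf{Mod}(\Sigma_n)$, where $\Sigma_n$ consists of the Boolean algebra axioms, the equations saying each $s_{ij}$ ($i\neq j<n$) is a Boolean endomorphism, and $t_1(x)=t_2(x)$ for all words $t_1,t_2$ in the $s_{ij}$ whose associated compositions of transpositions $[i,j]$ coincide in $S_n$. A set $V\subseteq{}^nU$ is permutable if $s\circ[i,j]\in V$ whenever $s\in V$, $i\neq j<n$. $\wp(V)=\langle\mathcal P(V);\cap,-,S_{ij}\rangle$ with complement relative to $V$ and $S_{ij}(Y)=\{q\in V:q\circ[i,j]\in Y\}$. *)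

theory Defs
  imports Main "HOL-Library.Countable_Set"
begin

definition tr :: "nat \<Rightarrow> nat \<Rightarrow> nat \<Rightarrow> nat" where
  "tr i j k = (if k = i then j else if k = j then i else k)"

text \<open>Words in the s_ij: lists of index pairs (i,j) with i \<noteq> j < n.\<close>
definition valid_word :: "nat \<Rightarrow> (nat \<times> nat) list \<Rightarrow> bool" where
  "valid_word n w = (\<forall>(i,j)\<in>set w. i \<noteq> j \<and> i < n \<and> j < n)"

definition word_app :: "(nat \<Rightarrow> nat \<Rightarrow> 'a \<Rightarrow> 'a) \<Rightarrow> (nat \<times> nat) list \<Rightarrow> 'a \<Rightarrow> 'a" where
  "word_app s w x = foldr (\<lambda>(i,j) y. s i j y) w x"

definition word_perm :: "(nat \<times> nat) list \<Rightarrow> nat \<Rightarrow> nat" where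
  "word_perm w = foldr (\<lambda>(i,j) p. tr i j \<circ> p) w id"

text \<open>A Boolean algebra (the type 'a, with operations inf and uminus) with
  operators s_ij is in TA_n = Mod(Sigma_n).\<close>
definition TA :: "nat \<Rightarrow> (nat \<Rightarrow> nat \<Rightarrow> 'a::boolean_algebra \<Rightarrow> 'a) \<Rightarrow> bool" where
  "TA n s =
    ((\<forall>i j. i \<noteq> j \<and> i < n \<and> j < n \<longrightarrow>
        (\<forall>x y. s i j (inf x y) = inf (s i j x) (s i j y) \<and> s i j (- x) = - s i j x)) \<and>
     (\<forall>w1 w2. valid_word n w1 \<and> valid_word n w2 \<and> word_perm w1 = word_perm w2 \<longrightarrow>
        (\<forall>x. word_app s w1 x = word_app s w2 x)))"

definition prod_is_zero :: "'a::boolean_algebra set \<Rightarrow> bool" where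
  "prod_is_zero X = (\<forall>y. (\<forall>x\<in>X. y \<le> x) \<longrightarrow> y = bot)"

text \<open>n-tuples are lists of length n; q o [i,j].\<close>
definition perm_seq :: "'u list \<Rightarrow> nat \<Rightarrow> nat \<Rightarrow> 'u list" where
  "perm_seq q i j = map (\<lambda>k. q ! tr i j k) [0..<length q]"

definition permutable :: "nat \<Rightarrow> 'u list set \<Rightarrow> bool" where
  "permutable n V = (\<forall>q\<in>V. \<forall>i j. i \<noteq> j \<and> i < n \<and> j < n \<longrightarrow> perm_seq q i j \<in> V)"

definition S_op :: "'u list set \<Rightarrow> nat \<Rightarrow> nat \<Rightarrow> 'u list set \<Rightarrow> 'u list set" where
  "S_op V i j Y = {q\<in>V. perm_seq q i j \<in> Y}"

text \<open>f is a homomorphism from the algebra (type 'a, inf, uminus, s) into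
  wp(V) = (Pow V, \<inter>, V - _, S_ij).\<close>
definition hom_wp :: "nat \<Rightarrow> (nat \<Rightarrow> nat \<Rightarrow> 'a::boolean_algebra \<Rightarrow> 'a) \<Rightarrow> 'u list set \<Rightarrow> ('a \<Rightarrow> 'u list set) \<Rightarrow> bool" where
  "hom_wp n s V f =
    ((\<forall>x. f x \<subseteq> V) \<and>
     (\<forall>x y. f (inf x y) = f x \<inter> f y) \<and>
     (\<forall>x. f (- x) = V - f x) \<and>
     (\<forall>i j x. i \<noteq> j \<and> i < n \<and> j < n \<longrightarrow> f (s i j x) = S_op V i j (f x)))"

end

theory Submission
  imports Defs
begin

lemma TA_hom:
  assumes "TA n s" "i \<noteq> j" "i < n" "j < n"
  shows "s i j (inf x y) = inf (s i j x) (s i j y)" "s i j (- x) = - s i j x"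
  using assms unfolding TA_def by blast+

lemma TA_word:
  assumes "TA n s" "valid_word n w1" "valid_word n w2" "word_perm w1 = word_perm w2"
  shows "word_app s w1 x = word_app s w2 x"
  using assms unfolding TA_def by blast

lemma wa_Nil[simp]: "word_app s [] x = x" by (simp add: word_app_def)
lemma wa_Cons[simp]: "word_app s ((i,j)#w) x = s i j (word_app s w x)" by (simp add: word_app_def)
lemma wa_append: "word_app s (u@v) x = word_app s u (word_app s v x)"
  by (simp add: word_app_def)

lemma valid_Nil[simp]: "valid_word n []" by (simp add: valid_word_def)
lemma valid_Cons[simp]: "valid_word n ((i,j)#w) \<longleftrightarrow> i \<noteq> j \<and> i < n \<and> j < n \<and> valid_word n w"
  by (simp add: valid_word_def)
lemma valid_append[simp]: "valid_word n (u@v) \<longleftrightarrow> valid_word n u \<and> valid_word n v"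
  by (auto simp add: valid_word_def)
lemma valid_rev[simp]: "valid_word n (rev u) \<longleftrightarrow> valid_word n u"
  by (auto simp add: valid_word_def)

lemma wa_inf: "TA n s \<Longrightarrow> valid_word n w \<Longrightarrow> word_app s w (inf x y) = inf (word_app s w x) (word_app s w y)"
  by (induction w) (auto simp: TA_hom)

lemma wa_neg: "TA n s \<Longrightarrow> valid_word n w \<Longrightarrow> word_app s w (- x) = - word_app s w x"
  by (induction w) (auto simp: TA_hom)

lemma wa_mono: assumes "TA n s" "valid_word n w" "x \<le> y" shows "word_app s w x \<le> word_app s w y"
proof -
  have "x = inf x y" using assms(3) by (simp add: inf_absorb1)
  then have "word_app s w x = inf (word_app s w x) (word_app s w y)"
    by (metis assms(1,2) wa_inf)
  then show ?thesis by (metis inf.cobounded2)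
qed

lemma wa_bot: assumes "TA n s" "valid_word n w" shows "word_app s w bot = bot"
proof -
  have "word_app s w (inf bot (- bot)) = inf (word_app s w bot) (- word_app s w bot)"
    using assms by (simp only: wa_inf wa_neg)
  then show ?thesis by (metis inf_compl_bot)
qed

lemma wa_top: assumes "TA n s" "valid_word n w" shows "word_app s w top = top"
proof -
  have "word_app s w top = - word_app s w bot" using wa_neg[OF assms, of bot] by simp
  then show ?thesis using wa_bot[OF assms] by simp
qed

lemma wp_foldr: "foldr (\<lambda>(i,j) p. tr i j \<circ> p) w p = word_perm w \<circ> p"
  by (induction w arbitrary: p) (auto simp: word_perm_def)

lemma wp_Nil[simp]: "word_perm [] = id" by (simp add: word_perm_def)
lemma wp_Cons[simp]: "word_perm ((i,j)#w) = tr i j \<circ> word_perm w"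
  by (simp add: word_perm_def)
lemma wp_append: "word_perm (u@v) = word_perm u \<circ> word_perm v"
proof -
  have "word_perm (u@v) = foldr (\<lambda>(i,j) p. tr i j \<circ> p) u (word_perm v)"
    unfolding word_perm_def by simp
  then show ?thesis using wp_foldr by simp
qed

lemma tr_tr: "tr i j \<circ> tr i j = id"
  by (auto simp: tr_def fun_eq_iff)

lemma wp_rev: "word_perm (rev w @ w) = id"
proof (induction w)
  case Nil then show ?case by simp
next
  case (Cons p w)
  obtain i j where p: "p = (i,j)" by force
  have "word_perm (rev (p#w) @ (p#w)) = word_perm (rev w) \<circ> (tr i j \<circ> tr i j) \<circ> word_perm w"
    by (simp add: p wp_append comp_assoc)
  also have "\<dots> = word_perm (rev w @ w)" by (simp add: tr_tr wp_append)
  finally show ?case using Cons by simp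
qed

lemma wa_inv: assumes "TA n s" "valid_word n w"
  shows "word_app s (rev w) (word_app s w x) = x"
proof -
  have "word_app s (rev w) (word_app s w x) = word_app s (rev w @ w) x" by (simp add: wa_append)
  also have "\<dots> = word_app s [] x"
    by (rule TA_word[OF assms(1)]) (use assms(2) wp_rev in auto)
  finally show ?thesis by simp
qed

lemma omit:
  assumes "TA n s" "valid_word n w" "prod_is_zero X" "c \<noteq> bot"
  shows "\<exists>x\<in>X. inf c (- word_app s w x) \<noteq> bot"
proof (rule ccontr)
  assume "\<not> ?thesis"
  then have h: "\<forall>x\<in>X. c \<le> word_app s w x"
    by (metis compl_le_compl_iff double_compl inf_shunt)
  have "\<forall>x\<in>X. word_app s (rev w) c \<le> x"
    using h wa_mono[OF assms(1), of "rev w"] wa_inv[OF assms(1,2)] assms(2) by (metis valid_rev)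
  then have "word_app s (rev w) c = bot" using assms(3) unfolding prod_is_zero_def by blast
  then have "word_app s w (word_app s (rev w) c) = bot" using wa_bot assms by metis
  moreover have "word_app s w (word_app s (rev w) c) = c"
    using wa_inv[OF assms(1), of "rev w"] assms(2) by simp
  ultimately show False using assms(4) by simp
qed

definition stepc :: "nat \<Rightarrow> (nat \<Rightarrow> nat \<Rightarrow> 'a::boolean_algebra \<Rightarrow> 'a) \<Rightarrow> 'a set \<Rightarrow> (nat \<Rightarrow> 'a) \<Rightarrow> (nat \<Rightarrow> (nat\<times>nat) list) \<Rightarrow> nat \<Rightarrow> 'a \<Rightarrow> 'a" where
  "stepc n s X e ws k c = (let w = ws k;
     c1 = (if valid_word n w \<and> c \<noteq> bot then inf c (- word_app s w (SOME x. x \<in> X \<and> inf c (- word_app s w x) \<noteq> bot)) else c)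
     in if inf c1 (e k) \<noteq> bot then inf c1 (e k) else inf c1 (- e k))"

primrec chain :: "nat \<Rightarrow> (nat \<Rightarrow> nat \<Rightarrow> 'a::boolean_algebra \<Rightarrow> 'a) \<Rightarrow> 'a set \<Rightarrow> (nat \<Rightarrow> 'a) \<Rightarrow> (nat \<Rightarrow> (nat\<times>nat) list) \<Rightarrow> 'a \<Rightarrow> nat \<Rightarrow> 'a" where
  "chain n s X e ws a 0 = a"
| "chain n s X e ws a (Suc k) = stepc n s X e ws k (chain n s X e ws a k)"

lemma split_nonbot: "inf (c::'a::boolean_algebra) e = bot \<Longrightarrow> inf c (- e) = bot \<Longrightarrow> c = bot"
proof -
  assume a: "inf c e = bot" "inf c (- e) = bot"
  have "c \<le> - e" using a(1) by (simp add: inf_shunt)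
  moreover have "c \<le> e" using a(2) inf_shunt[of c "- e"] by simp
  ultimately have "c \<le> inf (- e) e" by (rule le_infI)
  then show "c = bot" by (simp add: bot_unique)
qed

lemma step_props:
  assumes "TA n s" "prod_is_zero X" "c \<noteq> bot"
  shows "stepc n s X e ws k c \<noteq> bot" "stepc n s X e ws k c \<le> c"
    "stepc n s X e ws k c \<le> e k \<or> stepc n s X e ws k c \<le> - e k"
    "valid_word n (ws k) \<Longrightarrow> \<exists>x\<in>X. stepc n s X e ws k c \<le> - word_app s (ws k) x"
proof -
  define w where "w = ws k"
  define c1 where "c1 = (if valid_word n w \<and> c \<noteq> bot then inf c (- word_app s w (SOME x. x \<in> X \<and> inf c (- word_app s w x) \<noteq> bot)) else c)"
  have st: "stepc n s X e ws k c = (if inf c1 (e k) \<noteq> bot then inf c1 (e k) else inf c1 (- e k))"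
    unfolding stepc_def w_def c1_def Let_def by simp
  have c1: "c1 \<noteq> bot \<and> c1 \<le> c"
  proof (cases "valid_word n w")
    case True
    from someI_ex[OF omit[OF assms(1) True assms(2,3), unfolded Bex_def]]
    show ?thesis unfolding c1_def using True assms(3) by auto
  next
    case False then show ?thesis unfolding c1_def using assms(3) by auto
  qed
  have c1w: "valid_word n w \<Longrightarrow> \<exists>x\<in>X. c1 \<le> - word_app s w x"
  proof -
    assume v: "valid_word n w"
    define x0 where "x0 = (SOME x. x \<in> X \<and> inf c (- word_app s w x) \<noteq> bot)"
    from someI_ex[OF omit[OF assms(1) v assms(2,3), unfolded Bex_def]]
    have "x0 \<in> X" unfolding x0_def by blast
    moreover have "c1 \<le> - word_app s w x0" unfolding c1_def x0_def using v assms(3) by simp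
    ultimately show ?thesis by blast
  qed
  have le: "stepc n s X e ws k c \<le> c1" unfolding st by auto
  show "stepc n s X e ws k c \<noteq> bot" unfolding st using c1 split_nonbot by metis
  show "stepc n s X e ws k c \<le> c" using le c1 by auto
  show "stepc n s X e ws k c \<le> e k \<or> stepc n s X e ws k c \<le> - e k" unfolding st by auto
  show "valid_word n (ws k) \<Longrightarrow> \<exists>x\<in>X. stepc n s X e ws k c \<le> - word_app s (ws k) x"
    using c1w le unfolding w_def by (meson order_trans)
qed

lemma ultra:
  assumes "TA n s" "prod_is_zero X" "countable (UNIV :: 'a set)" "(a::'a::boolean_algebra) \<noteq> bot"
  shows "\<exists>F. a \<in> F \<and> (\<forall>x y. inf x y \<in> F \<longleftrightarrow> x \<in> F \<and> y \<in> F) \<and> (\<forall>x. - x \<in> F \<longleftrightarrow> x \<notin> F)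
     \<and> (\<forall>w. valid_word n w \<longrightarrow> (\<exists>x\<in>X. word_app s w x \<notin> F))"
proof -
  obtain g :: "'a \<Rightarrow> nat" where g: "inj g" using assms(3) unfolding countable_def by blast
  define e where "e = inv g"
  have ge: "e (g x) = x" for x unfolding e_def using g by simp
  define ws :: "nat \<Rightarrow> (nat\<times>nat) list" where "ws = from_nat"
  have wsn: "ws (to_nat w) = w" for w unfolding ws_def by simp
  define c where "c = chain n s X e ws a"
  have nb: "c k \<noteq> bot" for k
    by (induction k) (auto simp: c_def assms step_props)
  have suc: "c (Suc k) = stepc n s X e ws k (c k)" for k by (simp add: c_def)
  have dec: "c m \<le> c k" if "k \<le> m" for k m
    using that
  proof (induction m)
    case 0 then show ?case by simp
  next
    case (Suc m)
    show ?case
    proof (cases "k = Suc m")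
      case True then show ?thesis by simp
    next
      case False
      then have "c m \<le> c k" using Suc by simp
      moreover have "c (Suc m) \<le> c m" using step_props(2)[OF assms(1,2) nb] suc by metis
      ultimately show ?thesis by simp
    qed
  qed
  define F where "F = {x. \<exists>k. c k \<le> x}"
  have "c 0 \<le> a" by (simp add: c_def)
  then have aF: "a \<in> F" unfolding F_def by blast
  have infF: "inf x y \<in> F \<longleftrightarrow> x \<in> F \<and> y \<in> F" for x y
  proof
    assume "inf x y \<in> F" then show "x \<in> F \<and> y \<in> F" unfolding F_def
      by auto
  next
    assume "x \<in> F \<and> y \<in> F"
    then obtain k m where "c k \<le> x" "c m \<le> y" unfolding F_def by auto
    then have "c (max k m) \<le> x" "c (max k m) \<le> y"
      using dec[of k "max k m"] dec[of m "max k m"] by auto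
    then show "inf x y \<in> F" unfolding F_def by auto
  qed
  have negF: "- x \<in> F \<longleftrightarrow> x \<notin> F" for x
  proof
    assume "- x \<in> F"
    then have "inf x (- x) \<notin> F" unfolding F_def using nb by (simp add: bot_unique)
    then show "x \<notin> F" using infF \<open>- x \<in> F\<close> by blast
  next
    assume "x \<notin> F"
    have "c (Suc (g x)) \<le> e (g x) \<or> c (Suc (g x)) \<le> - e (g x)"
      using step_props(3)[OF assms(1,2) nb] suc by metis
    then show "- x \<in> F" using \<open>x \<notin> F\<close> unfolding F_def ge by auto
  qed
  have omF: "\<exists>x\<in>X. word_app s w x \<notin> F" if "valid_word n w" for w
  proof -
    have "\<exists>x\<in>X. c (Suc (to_nat w)) \<le> - word_app s w x"
      using step_props(4)[OF assms(1,2) nb, of ws "to_nat w" e] that wsn suc by metis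
    then obtain x where "x \<in> X" "- word_app s w x \<in> F" unfolding F_def by auto
    then show ?thesis using negF by blast
  qed
  show ?thesis using aF infF negF omF by blast
qed

definition enc :: "nat \<Rightarrow> nat \<Rightarrow> (nat\<times>nat) list \<Rightarrow> nat list" where
  "enc n k w = map (\<lambda>m. k*n + word_perm w m) [0..<n]"

lemma tr_less: "i < n \<Longrightarrow> j < n \<Longrightarrow> m < n \<Longrightarrow> tr i j m < n" by (simp add: tr_def)
lemma tr_ge: "i < n \<Longrightarrow> j < n \<Longrightarrow> m \<ge> n \<Longrightarrow> tr i j m = m" by (simp add: tr_def)

lemma wp_less: "valid_word n w \<Longrightarrow> m < n \<Longrightarrow> word_perm w m < n"
  by (induction w arbitrary: m) (auto simp: tr_less)
lemma wp_ge: "valid_word n w \<Longrightarrow> m \<ge> n \<Longrightarrow> word_perm w m = m"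
  by (induction w arbitrary: m) (auto simp: tr_ge)

lemma enc_eq:
  assumes "n > 0" "valid_word n w" "valid_word n w'" "enc n k w = enc n k' w'"
  shows "k = k' \<and> word_perm w = word_perm w'"
proof -
  have e: "k*n + word_perm w m = k'*n + word_perm w' m" if "m < n" for m
    using assms(4) that unfolding enc_def by (metis (no_types, lifting) add_0 diff_zero nth_map nth_upt length_upt)
  have "(k*n + word_perm w 0) div n = k" using wp_less[OF assms(2) assms(1)] assms(1) by simp
  moreover have "(k'*n + word_perm w' 0) div n = k'" using wp_less[OF assms(3) assms(1)] assms(1) by simp
  ultimately have kk: "k = k'" using e[OF assms(1)] by simp
  have "word_perm w m = word_perm w' m" for m
    using e[of m] kk wp_ge[OF assms(2), of m] wp_ge[OF assms(3), of m] by (cases "m < n") auto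
  then show ?thesis using kk by auto
qed

lemma perm_enc:
  assumes "i < n" "j < n"
  shows "perm_seq (enc n k w) i j = enc n k (w @ [(i,j)])"
proof -
  have "enc n k w ! tr i j m = k*n + word_perm (w @ [(i,j)]) m" if "m < n" for m
  proof -
    have "tr i j m < n" using tr_less assms that by blast
    then show ?thesis unfolding enc_def by (simp add: wp_append)
  qed
  then show ?thesis unfolding perm_seq_def
    by (simp add: enc_def cong: map_cong)
qed

theorem corollary3p20:
  fixes n :: nat and s :: "nat \<Rightarrow> nat \<Rightarrow> 'a::boolean_algebra \<Rightarrow> 'a" and X :: "'a set"
  assumes "n \<ge> 2"
    and "TA n s"
    and "countable (UNIV :: 'a set)"
    and "prod_is_zero X"
  shows "\<exists>(U :: nat set) (V :: nat list set) (f :: 'a \<Rightarrow> nat list set).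
           V \<subseteq> {q. length q = n \<and> set q \<subseteq> U} \<and> permutable n V \<and>
           hom_wp n s V f \<and> inj f \<and> V \<inter> (\<Inter>x\<in>X. f x) = {}"
proof -
  have n0: "n > 0" using assms(1) by simp
  let ?P = "\<lambda>a F. a \<in> F \<and> (\<forall>x y. inf x y \<in> F \<longleftrightarrow> x \<in> F \<and> y \<in> F) \<and> (\<forall>x. - x \<in> F \<longleftrightarrow> x \<notin> F)
     \<and> (\<forall>w. valid_word n w \<longrightarrow> (\<exists>x\<in>X. word_app s w x \<notin> F))"
  have ex: "\<exists>F. a \<noteq> bot \<longrightarrow> ?P a F" for a
  proof (cases "a = bot")
    case True then show ?thesis by simp
  next
    case False
    obtain F where F: "?P a F" using ultra[OF assms(2,4,3) False] by (elim exE)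
    show ?thesis by (rule exI[of _ F]) (rule impI, rule F)
  qed
  have "\<forall>a. \<exists>F. a \<noteq> bot \<longrightarrow> ?P a F" using ex by (rule allI)
  from choice[OF this] obtain UF where UF0: "\<forall>a. a \<noteq> bot \<longrightarrow> ?P a (UF a)" by (elim exE)
  have UF: "?P a (UF a)" if "a \<noteq> bot" for a by (rule mp[OF spec[OF UF0] that])
  have UFa: "a \<in> UF a" if "a \<noteq> bot" for a using UF[OF that] by (elim conjE)
  have UFinf: "inf x y \<in> UF a \<longleftrightarrow> x \<in> UF a \<and> y \<in> UF a" if "a \<noteq> bot" for a x y
    using UF[OF that] by (elim conjE) (erule allE)+
  have UFneg: "- x \<in> UF a \<longleftrightarrow> x \<notin> UF a" if "a \<noteq> bot" for a x
    using UF[OF that] by (elim conjE) (erule allE)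
  have UFom: "\<exists>x\<in>X. word_app s w x \<notin> UF a" if "a \<noteq> bot" "valid_word n w" for a w
    using UF[OF that(1)] that(2) by (elim conjE) (erule allE, erule mp)
  have topUF: "top \<in> UF a" if "a \<noteq> bot" for a
  proof -
    have "\<not> (a \<in> UF a \<and> - a \<in> UF a)" using UFneg[OF that, of a] by blast
    then have "inf a (- a) \<notin> UF a" using UFinf[OF that] by blast
    then have "bot \<notin> UF a" by simp
    then have "- bot \<in> UF a" using UFneg[OF that, of bot] by blast
    then show ?thesis by simp
  qed
  obtain g :: "'a \<Rightarrow> nat" where g: "inj g" using assms(3) unfolding countable_def by blast
  define e where "e = inv g"
  have ge: "e (g x) = x" for x unfolding e_def using g by simp
  define f where "f x = {enc n k w | k w. valid_word n w \<and> e k \<noteq> bot \<and> word_app s w x \<in> UF (e k)}" for x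
  define V where "V = f top"
  have mem: "enc n k w \<in> f x \<longleftrightarrow> e k \<noteq> bot \<and> word_app s w x \<in> UF (e k)" if "valid_word n w" for k w x
  proof
    assume "enc n k w \<in> f x"
    then obtain k' w' where "valid_word n w'" "e k' \<noteq> bot" "word_app s w' x \<in> UF (e k')"
      "enc n k w = enc n k' w'" unfolding f_def by blast
    moreover then have "k = k' \<and> word_perm w = word_perm w'" using enc_eq n0 that by metis
    moreover then have "word_app s w x = word_app s w' x" using TA_word assms(2) that calculation by metis
    ultimately show "e k \<noteq> bot \<and> word_app s w x \<in> UF (e k)" by simp
  next
    assume "e k \<noteq> bot \<and> word_app s w x \<in> UF (e k)"
    then show "enc n k w \<in> f x" unfolding f_def using that by blast
  qed
  have inQ: "\<exists>k w. valid_word n w \<and> q = enc n k w" if "q \<in> f x" for q x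
    using that unfolding f_def by blast
  have memV: "enc n k w \<in> V \<longleftrightarrow> e k \<noteq> bot" if "valid_word n w" for k w
    unfolding V_def using mem[OF that] wa_top[OF assms(2) that] topUF by auto
  have eqI: "f x = Y" if "Y \<subseteq> V" "\<And>k w. valid_word n w \<Longrightarrow> e k \<noteq> bot \<Longrightarrow> enc n k w \<in> f x \<longleftrightarrow> enc n k w \<in> Y" for x Y
  proof (intro set_eqI iffI)
    fix q assume "q \<in> f x"
    then obtain k w where kw: "valid_word n w" "q = enc n k w" using inQ by blast
    then show "q \<in> Y" using that(2) mem \<open>q \<in> f x\<close> by blast
  next
    fix q assume "q \<in> Y"
    then have "q \<in> V" using that(1) by blast
    then obtain k w where kw: "valid_word n w" "q = enc n k w" using inQ V_def by blast
    then show "q \<in> f x" using that(2) memV \<open>q \<in> V\<close> \<open>q \<in> Y\<close> by blast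
  qed
  have sub: "f x \<subseteq> V" for x
  proof
    fix q assume "q \<in> f x"
    then obtain k w where kw: "valid_word n w" "q = enc n k w" using inQ by blast
    then show "q \<in> V" using mem memV \<open>q \<in> f x\<close> by blast
  qed
  have hom: "hom_wp n s V f"
    unfolding hom_wp_def
  proof (intro conjI allI impI)
    show "f x \<subseteq> V" for x by (rule sub)
    show "f (inf x y) = f x \<inter> f y" for x y
      by (rule eqI) (use sub in \<open>auto simp: mem wa_inf[OF assms(2)] UFinf\<close>)
    show "f (- x) = V - f x" for x
      by (rule eqI) (use memV in \<open>auto simp: mem wa_neg[OF assms(2)] UFneg\<close>)
    fix i j x assume ij: "i \<noteq> j \<and> i < n \<and> j < n"
    show "f (s i j x) = S_op V i j (f x)"
    proof (rule eqI)
      show "S_op V i j (f x) \<subseteq> V" unfolding S_op_def by blast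
      fix k w assume v: "valid_word n w" "e k \<noteq> bot"
      have v2: "valid_word n (w @ [(i,j)])" using v ij by simp
      show "enc n k w \<in> f (s i j x) \<longleftrightarrow> enc n k w \<in> S_op V i j (f x)"
        unfolding S_op_def using v v2 ij
        by (simp add: mem memV perm_enc wa_append)
    qed
  qed
  have injf: "inj f"
  proof (rule injI, rule ccontr)
    fix x y assume fe: "f x = f y" and ne: "x \<noteq> y"
    have "\<exists>a b. a \<noteq> b \<and> f a = f b \<and> inf a (- b) \<noteq> bot"
    proof (cases "inf x (- y) = bot")
      case True
      then have "x \<le> y" by (metis compl_le_compl_iff double_compl inf_shunt)
      then have "inf y (- x) \<noteq> bot" using ne
        by (metis antisym compl_le_compl_iff double_compl inf_shunt)
      then show ?thesis using fe ne by metis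
    next
      case False then show ?thesis using fe ne by metis
    qed
    then obtain a b where ab: "f a = f b" "inf a (- b) \<noteq> bot" by blast
    let ?d = "inf a (- b)"
    have dd: "?d \<in> UF ?d" using UFa ab(2) by blast
    have "a \<in> UF ?d" "- b \<in> UF ?d" using dd UFinf[OF ab(2)] by blast+
    then have "a \<in> UF ?d" "b \<notin> UF ?d" using UFneg[OF ab(2)] by blast+
    then have "enc n (g ?d) [] \<in> f a" "enc n (g ?d) [] \<notin> f b"
      using mem[of "[]"] ge ab(2) by auto
    then show False using ab(1) by simp
  qed
  have om: "V \<inter> (\<Inter>x\<in>X. f x) = {}"
  proof (rule ccontr)
    assume "V \<inter> (\<Inter>x\<in>X. f x) \<noteq> {}"
    then obtain q where q: "q \<in> V" "\<forall>x\<in>X. q \<in> f x" by blast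
    then obtain k w where kw: "valid_word n w" "q = enc n k w" using inQ V_def by blast
    then have ek: "e k \<noteq> bot" using memV q by blast
    then obtain x where "x \<in> X" "word_app s w x \<notin> UF (e k)" using UFom[OF ek kw(1)] by blast
    then show False using q kw mem by blast
  qed
  have perm: "permutable n V"
    unfolding permutable_def
  proof (intro ballI allI impI)
    fix q i j assume q: "q \<in> V" and ij: "i \<noteq> j \<and> i < n \<and> j < n"
    then obtain k w where kw: "valid_word n w" "q = enc n k w" using inQ V_def by blast
    then show "perm_seq q i j \<in> V" using q ij memV by (simp add: perm_enc)
  qed
  have len: "V \<subseteq> {q. length q = n \<and> set q \<subseteq> UNIV}"
    using inQ V_def by (force simp: enc_def)
  show ?thesis using len perm hom injf om by blast
qed

end
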